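(* Let $r>0$, $T>0$, let $\sigma_1$ be a nonnegative random variable with $P\{\sigma_1>x\}=L(x)/x^{\alpha}$, where $\alpha>0$ and $L$ is continuous, slowly varying, with $\lim_{x\to\infty}L(x)=\infty$. Let $V$ be uniformly distributed on $(0,T]$ and independent of $\sigma_1$, and let $F_T(x)=P\{e^{-rV}\sigma_1\le x\}$. Then $F_T$ has a regularly varying tail. *)

theory Defs
  imports "HOL-Probability.Probability"
begin

definition slowly_varying :: "(real \<Rightarrow> real) \<Rightarrow> bool" where
  "slowly_varying L \<longleftrightarrow>
     (\<forall>\<^sub>F x in at_top. L x > 0) \<and>
     (\<forall>t>0. ((\<lambda>x. L (t * x) / L x) \<longlongrightarrow> 1) at_top)"

definition regularly_varying_tail :: "(real \<Rightarrow> real) \<Rightarrow> bool" where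
  "regularly_varying_tail F \<longleftrightarrow>
     (\<exists>\<rho> L. slowly_varying L \<and> (\<forall>\<^sub>F x in at_top. 1 - F x = x powr \<rho> * L x))"

end

theory Submission
  imports Defs
begin

lemma enn_le_aux: "0 \<le> a \<Longrightarrow> 0 \<le> b \<Longrightarrow> x \<le> a*b \<Longrightarrow> ennreal x \<le> ennreal a * ennreal b"
  by (simp add: ennreal_mult[symmetric] ennreal_leI)
lemma enn_ge_aux: "0 \<le> a \<Longrightarrow> 0 \<le> b \<Longrightarrow> a*b \<le> x \<Longrightarrow> ennreal a * ennreal b \<le> ennreal x"
  by (simp add: ennreal_mult[symmetric] ennreal_leI)

theorem lemma3p2:
  fixes M :: "'a measure" and \<sigma>\<^sub>1 V :: "'a \<Rightarrow> real"
    and r T \<alpha> :: real and L :: "real \<Rightarrow> real"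
  assumes "prob_space M"
    and "r > 0" and "T > 0" and "\<alpha> > 0"
    and "\<sigma>\<^sub>1 \<in> borel_measurable M" and "V \<in> borel_measurable M"
    and "\<forall>\<omega>\<in>space M. \<sigma>\<^sub>1 \<omega> \<ge> 0"
    and "\<forall>x>0. measure M {\<omega>\<in>space M. \<sigma>\<^sub>1 \<omega> > x} = L x / x powr \<alpha>"
    and "continuous_on {0<..} L" and "slowly_varying L" and "filterlim L at_top at_top"
    and "distr M borel V = uniform_measure lborel {0<..T}"
    and "prob_space.indep_var M borel \<sigma>\<^sub>1 borel V"
  shows "regularly_varying_tail
           (\<lambda>x. measure M {\<omega>\<in>space M. exp (- r * V \<omega>) * \<sigma>\<^sub>1 \<omega> \<le> x})"
proof -
  interpret P: prob_space M by fact
  note [measurable] = assms(5,6)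
  define \<mu> where "\<mu> = distr M borel \<sigma>\<^sub>1"
  define \<nu> where "\<nu> = distr M borel V"
  interpret Pmu: prob_space \<mu> unfolding \<mu>_def by (rule P.prob_space_distr) simp
  interpret Pnu: prob_space \<nu> unfolding \<nu>_def by (rule P.prob_space_distr) simp
  interpret PP: pair_prob_space \<mu> \<nu> by unfold_locales
  have joint: "\<mu> \<Otimes>\<^sub>M \<nu> = distr M (borel \<Otimes>\<^sub>M borel) (\<lambda>\<omega>. (\<sigma>\<^sub>1 \<omega>, V \<omega>))"
    using assms(13) unfolding P.indep_var_distribution_eq \<mu>_def \<nu>_def by simp
  define h where "h y = measure M {\<omega>\<in>space M. y < \<sigma>\<^sub>1 \<omega>}" for y
  define G where "G x = measure M {\<omega>\<in>space M. x < exp (- r * V \<omega>) * \<sigma>\<^sub>1 \<omega>}" for x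
  define A where "A x = {p::real\<times>real. x * exp (r * snd p) < fst p}" for x
  have A_bor: "A x \<in> sets (borel \<Otimes>\<^sub>M borel)" for x
  proof -
    have "open (A x)" unfolding A_def by (intro open_Collect_less continuous_intros)
    then show ?thesis unfolding borel_prod by (rule borel_open)
  qed
  have sets_eq: "sets (\<mu> \<Otimes>\<^sub>M \<nu>) = sets (borel \<Otimes>\<^sub>M borel)"
    unfolding \<mu>_def \<nu>_def by (intro sets_pair_measure_cong) simp_all
  have A_sets: "A x \<in> sets (\<mu> \<Otimes>\<^sub>M \<nu>)" for x
    using A_bor sets_eq by simp
  have h_anti: "h y' \<le> h y" if "y \<le> y'" for y y'
    unfolding h_def using that by (intro P.finite_measure_mono) auto
  have Gnn: "0 \<le> G x" for x unfolding G_def by simp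
  have h_nn: "0 \<le> h y" for y unfolding h_def by simp
  have k_eq: "emeasure \<mu> ((\<lambda>s. (s, v)) -` A x) = ennreal (h (x * exp (r * v)))" for x v
  proof -
    have "(\<lambda>s. (s, v)) -` A x = {s. x * exp (r * v) < s}"
      unfolding A_def by auto
    then show ?thesis unfolding \<mu>_def h_def
      by (simp add: emeasure_distr P.emeasure_eq_measure Collect_conj_eq[symmetric] Int_def conj_commute)
  qed
  have k_meas: "(\<lambda>v. ennreal (h (x * exp (r * v)))) \<in> borel_measurable \<nu>" for x
    using PP.measurable_emeasure_Pair2[OF A_sets[of x]] by (simp add: k_eq)
  have G_eq: "ennreal (G x) = (\<integral>\<^sup>+ v. ennreal (h (x * exp (r * v))) \<partial>\<nu>)" for x
  proof -
    have "{\<omega>\<in>space M. x < exp (- r * V \<omega>) * \<sigma>\<^sub>1 \<omega>} = (\<lambda>\<omega>. (\<sigma>\<^sub>1 \<omega>, V \<omega>)) -` A x \<inter> space M"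
    proof -
      have "x < exp (- r * v) * s \<longleftrightarrow> x * exp (r * v) < s" for v s
      proof -
        have "x < exp (- r * v) * s \<longleftrightarrow> x * exp (r * v) < exp (- r * v) * s * exp (r * v)"
          by simp
        also have "exp (- r * v) * s * exp (r * v) = s"
          by (simp add: exp_minus field_simps)
        finally show ?thesis .
      qed
      then show ?thesis unfolding A_def by auto
    qed
    then have "ennreal (G x) = emeasure (distr M (borel \<Otimes>\<^sub>M borel) (\<lambda>\<omega>. (\<sigma>\<^sub>1 \<omega>, V \<omega>))) (A x)"
      unfolding G_def using A_bor[of x]
      by (subst emeasure_distr) (auto simp: P.emeasure_eq_measure)
    also have "\<dots> = emeasure (\<mu> \<Otimes>\<^sub>M \<nu>) (A x)" by (simp add: joint)
    also have "\<dots> = (\<integral>\<^sup>+ v. ennreal (h (x * exp (r * v))) \<partial>\<nu>)"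
      by (simp add: PP.emeasure_pair_measure_alt2[OF A_sets] k_eq)
    finally show ?thesis .
  qed
  have AE_nu: "AE v in \<nu>. 0 < v \<and> v \<le> T"
    unfolding \<nu>_def assms(12) by (intro AE_uniform_measureI) auto
  have h_form: "h y = L y / y powr \<alpha>" if "y > 0" for y
    using assms(8) that unfolding h_def by simp
  have Lpos: "\<forall>\<^sub>F y in at_top. L y > 0"
    and Llim: "\<And>t. t>0 \<Longrightarrow> ((\<lambda>x. L (t*x) / L x) \<longlongrightarrow> 1) at_top"
    using assms(10) unfolding slowly_varying_def by auto
  have h_pos: "\<forall>\<^sub>F y in at_top. h y > 0"
    using Lpos eventually_gt_at_top[of 0] by eventually_elim (simp add: h_form)
  have h_ratio: "((\<lambda>y. h (t*y) / h y) \<longlongrightarrow> t powr (-\<alpha>)) at_top" if t: "t > 0" for t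
  proof -
    have lim: "((\<lambda>y. L (t*y) / L y * t powr (-\<alpha>)) \<longlongrightarrow> 1 * t powr (-\<alpha>)) at_top"
      by (intro tendsto_mult Llim t tendsto_const)
    have ev: "\<forall>\<^sub>F y in at_top. L (t*y) / L y * t powr (-\<alpha>) = h (t*y) / h y"
      using Lpos eventually_gt_at_top[of 0]
    proof eventually_elim
      case (elim y)
      have "h (t*y) / h y = (L (t*y) / (t*y) powr \<alpha>) / (L y / y powr \<alpha>)"
        using elim t by (simp add: h_form)
      also have "\<dots> = L (t*y) / L y * (y powr \<alpha> / (t*y) powr \<alpha>)"
        using elim t by (simp add: field_simps)
      also have "y powr \<alpha> / (t*y) powr \<alpha> = t powr (-\<alpha>)"
        using elim t by (simp add: powr_mult powr_minus field_simps)
      finally show ?case by simp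
    qed
    show ?thesis using lim tendsto_cong[OF ev] by simp
  qed
  have bounds: "\<forall>\<^sub>F x in at_top. (c - e) * G x \<le> G (t*x) \<and> G (t*x) \<le> (c + e) * G x"
    if t: "t > 0" and e: "0 < e" "e < c" and c_def: "c = t powr (-\<alpha>)" for t e c
  proof -
    have "\<forall>\<^sub>F y in at_top. dist (h (t*y) / h y) c < e"
      using h_ratio[OF t] e unfolding c_def tendsto_iff by auto
    then have "\<forall>\<^sub>F y in at_top. (c - e) * h y \<le> h (t*y) \<and> h (t*y) \<le> (c + e) * h y"
      using h_pos
    proof eventually_elim
      case (elim y)
      then have "c - e < h (t*y) / h y" "h (t*y)/h y < c + e"
        by (auto simp: dist_real_def abs_less_iff)
      with elim show ?case by (simp add: field_simps)
    qed
    then obtain y0 where y0: "\<And>y. y \<ge> y0 \<Longrightarrow> (c - e) * h y \<le> h (t*y) \<and> h (t*y) \<le> (c + e) * h y"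
      by (auto simp: eventually_at_top_linorder)
    show ?thesis unfolding eventually_at_top_linorder
    proof (intro exI[of _ "max y0 0"] allI impI)
      fix x assume x: "max y0 0 \<le> x"
      have ae: "AE v in \<nu>. (c - e) * h (x*exp (r * v)) \<le> h (t*x*exp (r * v)) \<and> h (t*x*exp (r * v)) \<le> (c + e) * h (x*exp (r * v))"
        using AE_nu
      proof eventually_elim
        case (elim v)
        have "1 \<le> exp (r * v)" using elim assms(2) by simp
        then have "x * 1 \<le> x * exp (r * v)" using x by (intro mult_left_mono) auto
        then have "y0 \<le> x * exp (r * v)" using x by simp
        from y0[OF this] show ?case by (simp add: mult.assoc)
      qed
      have c0: "0 < c" using e by simp
      have "ennreal (G (t*x)) = (\<integral>\<^sup>+ v. ennreal (h (t*x*exp (r * v))) \<partial>\<nu>)" by (rule G_eq)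
      also have "\<dots> \<le> (\<integral>\<^sup>+ v. ennreal (c+e) * ennreal (h (x*exp (r * v))) \<partial>\<nu>)"
        apply (intro nn_integral_mono_AE)
        using ae apply eventually_elim
        by (rule enn_le_aux) (use c0 e h_nn in auto)
      also have "\<dots> = ennreal (c+e) * ennreal (G x)"
        by (subst nn_integral_cmult[OF k_meas]) (simp add: G_eq)
      also have "\<dots> = ennreal ((c+e) * G x)"
        by (rule ennreal_mult[symmetric]) (use c0 e in \<open>auto simp: G_def\<close>)
      finally have "ennreal (G (t*x)) \<le> ennreal ((c+e) * G x)" .
      then have up: "G (t*x) \<le> (c+e) * G x"
        by (subst (asm) ennreal_le_iff) (use c0 e Gnn in auto)
      have "ennreal ((c-e) * G x) = ennreal (c-e) * ennreal (G x)"
        by (rule ennreal_mult) (use e in \<open>auto simp: G_def\<close>)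
      also have "\<dots> = (\<integral>\<^sup>+ v. ennreal (c-e) * ennreal (h (x*exp (r * v))) \<partial>\<nu>)"
        by (subst nn_integral_cmult[OF k_meas]) (simp add: G_eq)
      also have "\<dots> \<le> (\<integral>\<^sup>+ v. ennreal (h (t*x*exp (r * v))) \<partial>\<nu>)"
        apply (intro nn_integral_mono_AE)
        using ae apply eventually_elim
        by (rule enn_ge_aux) (use c0 e h_nn in auto)
      also have "\<dots> = ennreal (G (t*x))" by (rule G_eq[symmetric])
      finally have lo: "(c-e) * G x \<le> G (t*x)"
        by (subst (asm) ennreal_le_iff) (use Gnn in auto)
      show "(c - e) * G x \<le> G (t*x) \<and> G (t*x) \<le> (c + e) * G x" using up lo by simp
    qed
  qed
  have G_pos: "\<forall>\<^sub>F x in at_top. G x > 0"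
  proof -
    have "filterlim (\<lambda>x. exp (r * T) * x) at_top at_top"
      by (intro filterlim_tendsto_pos_mult_at_top[OF tendsto_const] filterlim_ident) simp
    with h_pos have "\<forall>\<^sub>F x in at_top. h (exp (r * T) * x) > 0"
      by (rule eventually_compose_filterlim)
    then show ?thesis using eventually_gt_at_top[of 0]
    proof eventually_elim
      case (elim x)
      have "ennreal (h (exp (r * T) * x)) = (\<integral>\<^sup>+ v. ennreal (h (exp (r * T) * x)) \<partial>\<nu>)"
        by (simp add: Pnu.emeasure_space_1)
      also have "\<dots> \<le> (\<integral>\<^sup>+ v. ennreal (h (x * exp (r * v))) \<partial>\<nu>)"
        apply (intro nn_integral_mono_AE)
        using AE_nu apply eventually_elim
        using elim assms(2) by (auto intro!: ennreal_leI h_anti)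
      also have "\<dots> = ennreal (G x)" by (rule G_eq[symmetric])
      finally have "h (exp (r * T) * x) \<le> G x"
        by (simp add: ennreal_le_iff G_def)
      with elim show ?case by linarith
    qed
  qed
  have G_ratio: "((\<lambda>x. G (t*x) / G x) \<longlongrightarrow> t powr (-\<alpha>)) at_top" if t: "t>0" for t
  proof (rule tendstoI)
    fix d :: real assume d: "d > 0"
    define c where "c = t powr (-\<alpha>)"
    have c: "c > 0" using t by (simp add: c_def)
    define e where "e = min (d/2) (c/2)"
    have e: "0 < e" "e < c" "e < d" using c d by (auto simp: e_def)
    from bounds[OF t e(1,2) c_def] G_pos
    show "\<forall>\<^sub>F x in at_top. dist (G (t*x) / G x) (t powr (-\<alpha>)) < d"
    proof eventually_elim
      case (elim x)
      then have "c - e \<le> G (t*x) / G x" "G (t*x)/G x \<le> c + e"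
        by (auto simp: field_simps)
      then show ?case using e unfolding c_def[symmetric] by (simp add: dist_real_def abs_le_iff)
    qed
  qed
  have ev_set: "{\<omega>\<in>space M. x < exp (- r * V \<omega>) * \<sigma>\<^sub>1 \<omega>} \<in> P.events" for x
    by measurable
  have F_eq: "1 - measure M {\<omega>\<in>space M. exp (- r * V \<omega>) * \<sigma>\<^sub>1 \<omega> \<le> x} = G x" for x
  proof -
    have "{\<omega>\<in>space M. exp (- r * V \<omega>) * \<sigma>\<^sub>1 \<omega> \<le> x}
        = space M - {\<omega>\<in>space M. x < exp (- r * V \<omega>) * \<sigma>\<^sub>1 \<omega>}" by auto
    then have "measure M {\<omega>\<in>space M. exp (- r * V \<omega>) * \<sigma>\<^sub>1 \<omega> \<le> x} = 1 - G x"
      unfolding G_def by (simp only: P.prob_compl[OF ev_set])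
    then show ?thesis by simp
  qed
  define L' where "L' x = G x * x powr \<alpha>" for x
  show ?thesis unfolding regularly_varying_tail_def
  proof (intro exI[of _ "-\<alpha>"] exI[of _ L'] conjI)
    show "slowly_varying L'" unfolding slowly_varying_def
    proof (intro conjI allI impI)
      show "\<forall>\<^sub>F x in at_top. L' x > 0"
        using G_pos eventually_gt_at_top[of 0] by eventually_elim (simp add: L'_def)
      fix t :: real assume t: "t > 0"
      have lim: "((\<lambda>x. t powr \<alpha> * (G (t*x) / G x)) \<longlongrightarrow> t powr \<alpha> * t powr (-\<alpha>)) at_top"
        by (intro tendsto_mult tendsto_const G_ratio t)
      have one: "t powr \<alpha> * t powr (-\<alpha>) = 1" using t by (simp add: powr_add[symmetric])
      have ev: "\<forall>\<^sub>F x in at_top. t powr \<alpha> * (G (t*x) / G x) = L' (t*x) / L' x"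
        using G_pos eventually_gt_at_top[of 0]
        by eventually_elim (use t in \<open>simp add: L'_def powr_mult field_simps\<close>)
      show "((\<lambda>x. L' (t*x) / L' x) \<longlongrightarrow> 1) at_top"
        using lim tendsto_cong[OF ev] one by simp
    qed
    show "\<forall>\<^sub>F x in at_top. 1 - measure M {\<omega>\<in>space M. exp (- r * V \<omega>) * \<sigma>\<^sub>1 \<omega> \<le> x} = x powr - \<alpha> * L' x"
      using eventually_gt_at_top[of 0] by eventually_elim (unfold F_eq, simp add: L'_def powr_minus field_simps)
  qed
qed
end
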